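(* Let $G$ be a finite simple graph on $[d]$ and let $I\in\{\langle [I_G]_2\rangle, J_G, L_G\}$. If $\mathcal{G}$ is the reduced Gröbner basis of $I$ with respect to a reverse lexicographic order on $R[G]$ such that $x_S\ge x_\emptyset$ for every $S\in S(G)$, then $\{\, g/x_\emptyset^{k} : g\in\mathcal{G},\ k\in\mathbb{Z}_{\ge0},\ x_\emptyset^k \text{ divides } g,\ x_\emptyset^{k+1}\text{ does not divide } g\,\}$ is a Gröbner basis of $I_G$.
   Context: A stable set of $G$ is a subset of $[d]$ with no edge of $G$ (including $\emptyset$ and singletons); $S(G)$ is the set of stable sets; $R[G]=\mathbb{K}[x_S : S\in S(G)]$ over a field $\mathbb{K}$, all variables of degree $1$. $I_G$ is the kernel of $\pi:R[G]\to\mathbb{K}[t_1,\dots,t_d,s]$, $\pi(x_S)=s\prod_{j\in S}t_j$. $\langle [I_G]_2\rangle$ is the ideal generated by the degree-$2$ homogeneous elements of $I_G$. $J_G$ is the ideal generated by all $x_{S_1}x_{S_2}-x_{S_3}x_{S_4}$ with $S_i\in S(G)$, $S_1\cap S_2=S_3\cap S_4=\emptyset$, $S_1\cup S_2=S_3\cup S_4$. $L_G=\langle x_{S\setminus\{i\}}x_{\{i\}}-x_Sx_\emptyset : i\in S\in S(G),\ |S|\ge2\rangle$. The (graded) reverse lexicographic order induced by an ordering $y_1>\dots>y_n$ of the variables: $u<v$ if $\deg u<\deg v$, or degrees are equal and the rightmost nonzero entry of the exponent vector of $v$ minus that of $u$ is negative. A Gröbner basis of $I$ w.r.t. $<$ is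 a finite subset of $I$ whose leading monomials generate ${\rm in}_<(I)$; it is reduced if all leading coefficients are $1$ and no monomial of any element lies in the ideal generated by the leading monomials of the other elements. *)

theory Defs
  imports Main "HOL-Library.Poly_Mapping"
begin

text \<open>Variables of R[G] are indexed by stable sets (type nat set); monomials are
  nat set =>0 nat; polynomials with coefficients in 'k are
  (nat set =>0 nat) =>0 k.\<close>

type_synonym mon = "nat set \<Rightarrow>\<^sub>0 nat"
type_synonym 'k pol = "mon \<Rightarrow>\<^sub>0 'k"

definition simple_graph :: "nat \<Rightarrow> nat set set \<Rightarrow> bool" where
  "simple_graph d E \<longleftrightarrow> (\<forall>e\<in>E. \<exists>i j. i \<noteq> j \<and> i \<in> {1..d} \<and> j \<in> {1..d} \<and> e = {i, j})"

definition stable_sets :: "nat \<Rightarrow> nat set set \<Rightarrow> nat set set" where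
  "stable_sets d E = {S. S \<subseteq> {1..d} \<and> (\<forall>e\<in>E. \<not> e \<subseteq> S)}"

definition var :: "nat set \<Rightarrow> 'k::comm_ring_1 pol" where
  "var S = Poly_Mapping.single (Poly_Mapping.single S 1) 1"

definition mon_poly :: "mon \<Rightarrow> 'k::comm_ring_1 pol" where
  "mon_poly m = Poly_Mapping.single m 1"

definition mdeg :: "mon \<Rightarrow> nat" where
  "mdeg m = (\<Sum>S\<in>Poly_Mapping.keys m. Poly_Mapping.lookup m S)"

definition in_ring :: "nat set set \<Rightarrow> 'k::comm_ring_1 pol \<Rightarrow> bool" where
  "in_ring V p \<longleftrightarrow> (\<forall>m\<in>Poly_Mapping.keys p. Poly_Mapping.keys m \<subseteq> V)"

inductive_set ideal_in :: "nat set set \<Rightarrow> 'k::comm_ring_1 pol set \<Rightarrow> 'k pol set"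
  for V F where
  zero: "0 \<in> ideal_in V F"
| gen: "f \<in> F \<Longrightarrow> f \<in> ideal_in V F"
| add: "p \<in> ideal_in V F \<Longrightarrow> q \<in> ideal_in V F \<Longrightarrow> p + q \<in> ideal_in V F"
| mult: "in_ring V q \<Longrightarrow> p \<in> ideal_in V F \<Longrightarrow> q * p \<in> ideal_in V F"

text \<open>The map pi : x_S \<mapsto> s * prod_{j\<in>S} t_j into K[t_1..t_d, s];
  target variables: None = s, Some j = t_j.\<close>
definition pi_mon :: "mon \<Rightarrow> (nat option \<Rightarrow>\<^sub>0 nat)" where
  "pi_mon m = (\<Sum>S\<in>Poly_Mapping.keys m. Poly_Mapping.single None (Poly_Mapping.lookup m S)
                 + (\<Sum>j\<in>S. Poly_Mapping.single (Some j) (Poly_Mapping.lookup m S)))"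

definition pi_map :: "'k::comm_ring_1 pol \<Rightarrow> (nat option \<Rightarrow>\<^sub>0 nat) \<Rightarrow>\<^sub>0 'k" where
  "pi_map p = (\<Sum>m\<in>Poly_Mapping.keys p. Poly_Mapping.single (pi_mon m) (Poly_Mapping.lookup p m))"

definition I_G :: "nat \<Rightarrow> nat set set \<Rightarrow> 'k::comm_ring_1 pol set" where
  "I_G d E = {p. in_ring (stable_sets d E) p \<and> pi_map p = 0}"

definition I_G_2 :: "nat \<Rightarrow> nat set set \<Rightarrow> 'k::comm_ring_1 pol set" where
  "I_G_2 d E = {p \<in> I_G d E. \<forall>m\<in>Poly_Mapping.keys p. mdeg m = 2}"

definition J_G :: "nat \<Rightarrow> nat set set \<Rightarrow> 'k::comm_ring_1 pol set" where
  "J_G d E = ideal_in (stable_sets d E)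
     {var S1 * var S2 - var S3 * var S4 | S1 S2 S3 S4.
        S1 \<in> stable_sets d E \<and> S2 \<in> stable_sets d E \<and> S3 \<in> stable_sets d E \<and> S4 \<in> stable_sets d E
        \<and> S1 \<inter> S2 = {} \<and> S3 \<inter> S4 = {} \<and> S1 \<union> S2 = S3 \<union> S4}"

definition L_G :: "nat \<Rightarrow> nat set set \<Rightarrow> 'k::comm_ring_1 pol set" where
  "L_G d E = ideal_in (stable_sets d E)
     {var (S - {i}) * var {i} - var S * var {} | S i.
        S \<in> stable_sets d E \<and> i \<in> S \<and> card S \<ge> 2}"

text \<open>Graded reverse lexicographic order induced by a ranking w of the variables:
  x_S > x_T iff w S > w T (w injective on the variables). Thus the "rightmost"
  entry of an exponent vector is the one of the variable with smallest w.
  u < v iff deg u < deg v, or degrees are equal and the entry of v - u at the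
  smallest variable where u and v differ is negative.\<close>
definition revlex_less :: "(nat set \<Rightarrow> nat) \<Rightarrow> mon \<Rightarrow> mon \<Rightarrow> bool" where
  "revlex_less w u v \<longleftrightarrow> mdeg u < mdeg v \<or>
     (mdeg u = mdeg v \<and> (\<exists>S. Poly_Mapping.lookup v S < Poly_Mapping.lookup u S \<and>
        (\<forall>T. Poly_Mapping.lookup u T \<noteq> Poly_Mapping.lookup v T \<longrightarrow> w S \<le> w T)))"

definition lead_mon :: "(nat set \<Rightarrow> nat) \<Rightarrow> 'k::comm_ring_1 pol \<Rightarrow> mon" where
  "lead_mon w p = (THE m. m \<in> Poly_Mapping.keys p \<and> (\<forall>m'\<in>Poly_Mapping.keys p. m' \<noteq> m \<longrightarrow> revlex_less w m' m))"

definition lead_coeff_mp :: "(nat set \<Rightarrow> nat) \<Rightarrow> 'k::comm_ring_1 pol \<Rightarrow> 'k" where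
  "lead_coeff_mp w p = Poly_Mapping.lookup p (lead_mon w p)"

definition init_ideal :: "nat set set \<Rightarrow> (nat set \<Rightarrow> nat) \<Rightarrow> 'k::comm_ring_1 pol set \<Rightarrow> 'k pol set" where
  "init_ideal V w I = ideal_in V {mon_poly (lead_mon w p) | p. p \<in> I \<and> p \<noteq> 0}"

definition lm_ideal :: "nat set set \<Rightarrow> (nat set \<Rightarrow> nat) \<Rightarrow> 'k::comm_ring_1 pol set \<Rightarrow> 'k pol set" where
  "lm_ideal V w G = ideal_in V {mon_poly (lead_mon w g) | g. g \<in> G \<and> g \<noteq> 0}"

definition is_groebner_basis :: "nat set set \<Rightarrow> (nat set \<Rightarrow> nat) \<Rightarrow> 'k::comm_ring_1 pol set \<Rightarrow> 'k pol set \<Rightarrow> bool" where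
  "is_groebner_basis V w I G \<longleftrightarrow> finite G \<and> G \<subseteq> I \<and> lm_ideal V w G = init_ideal V w I"

definition is_reduced_groebner_basis :: "nat set set \<Rightarrow> (nat set \<Rightarrow> nat) \<Rightarrow> 'k::comm_ring_1 pol set \<Rightarrow> 'k pol set \<Rightarrow> bool" where
  "is_reduced_groebner_basis V w I G \<longleftrightarrow> is_groebner_basis V w I G \<and>
     (\<forall>g\<in>G. g \<noteq> 0 \<and> lead_coeff_mp w g = 1) \<and>
     (\<forall>g\<in>G. \<forall>m\<in>Poly_Mapping.keys g. mon_poly m \<notin> lm_ideal V w (G - {g}))"

end

theory Submission
  imports Defs
begin


abbreviation ks where "ks \<equiv> Poly_Mapping.keys"
abbreviation sg where "sg \<equiv> Poly_Mapping.single"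
abbreviation lk where "lk \<equiv> Poly_Mapping.lookup"

lemma pm_sum_single: "(\<Sum>m\<in>ks p. sg m (lk p m)) = p"
  by (rule poly_mapping_eqI) (auto simp add: lookup_sum lookup_single when_def in_keys_iff)

lemma keysum_add:
  fixes g :: "'a \<Rightarrow> 'b::comm_monoid_add \<Rightarrow> 'c::comm_monoid_add"
  assumes "\<And>k. g k 0 = 0" "\<And>k x y. g k (x + y) = g k x + g k y"
  shows "(\<Sum>k\<in>ks (p + q). g k (lk (p+q) k)) = (\<Sum>k\<in>ks p. g k (lk p k)) + (\<Sum>k\<in>ks q. g k (lk q k))"
  by (rule setsum_keys_plus_distrib) (use assms in auto)

lemma mdeg_add: "mdeg (a + b) = mdeg a + mdeg b"
  unfolding mdeg_def by (rule keysum_add) auto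

lemma mdeg_single[simp]: "mdeg (sg S n) = n"
  unfolding mdeg_def by simp

lemma mdeg_zero[simp]: "mdeg 0 = 0"
  unfolding mdeg_def by simp

lemma lk_diff_keys: "lk u T \<noteq> lk v T \<Longrightarrow> T \<in> ks u \<union> ks v"
  by (auto simp: in_keys_iff)

lemma rl_irrefl: "\<not> revlex_less w u u"
  by (auto simp: revlex_less_def)

lemma rl_asym:
  assumes inj: "inj_on w V" and "ks u \<subseteq> V" "ks v \<subseteq> V" and uv: "revlex_less w u v"
  shows "\<not> revlex_less w v u"
proof
  assume vu: "revlex_less w v u"
  from uv vu have eq: "mdeg u = mdeg v" by (auto simp: revlex_less_def)
  from uv eq obtain S1 where a1: "lk v S1 < lk u S1" and b1: "\<forall>T. lk u T \<noteq> lk v T \<longrightarrow> w S1 \<le> w T"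
    by (auto simp: revlex_less_def)
  from vu eq obtain S2 where a2: "lk u S2 < lk v S2" and b2: "\<forall>T. lk v T \<noteq> lk u T \<longrightarrow> w S2 \<le> w T"
    by (auto simp: revlex_less_def)
  have S1: "S1 \<in> V" using lk_diff_keys[of u S1 v] a1 assms by auto
  have S2: "S2 \<in> V" using lk_diff_keys[of u S2 v] a2 assms by auto
  have "w S1 \<le> w S2" using b1 a2 by auto
  moreover have "w S2 \<le> w S1" using b2 a1 by auto
  ultimately have "S1 = S2" using inj S1 S2 by (auto dest: inj_onD)
  with a1 a2 show False by simp
qed

lemma rl_total:
  assumes inj: "inj_on w V" and uV: "ks u \<subseteq> V" and vV: "ks v \<subseteq> V" and ne: "u \<noteq> v"
  shows "revlex_less w u v \<or> revlex_less w v u"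
proof (cases "mdeg u = mdeg v")
  case False then show ?thesis by (auto simp: revlex_less_def)
next
  case True
  define D where "D = {T. lk u T \<noteq> lk v T}"
  have fin: "finite D" unfolding D_def
    by (rule finite_subset[of _ "ks u \<union> ks v"]) (auto simp: in_keys_iff)
  have "D \<noteq> {}" using ne unfolding D_def by (auto intro: poly_mapping_eqI)
  then obtain S where S: "S \<in> D" and mn: "w S = Min (w ` D)"
    using fin by (metis (no_types, lifting) Min_in finite_imageI image_iff image_is_empty)
  have le: "\<forall>T. lk u T \<noteq> lk v T \<longrightarrow> w S \<le> w T"
    using mn fin by (auto simp: D_def)
  from S have "lk u S < lk v S \<or> lk v S < lk u S" by (auto simp: D_def)
  then show ?thesis using le True unfolding revlex_less_def by (metis (no_types))
qed

lemma rl_trans: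
  assumes inj: "inj_on w V" and uV: "ks u \<subseteq> V" and vV: "ks v \<subseteq> V" and xV: "ks x \<subseteq> V"
    and uv: "revlex_less w u v" and vx: "revlex_less w v x"
  shows "revlex_less w u x"
proof (cases "mdeg u = mdeg v \<and> mdeg v = mdeg x")
  case False then show ?thesis using uv vx by (auto simp: revlex_less_def)
next
  case True
  from uv True obtain S1 where a1: "lk v S1 < lk u S1" and b1: "\<forall>T. lk u T \<noteq> lk v T \<longrightarrow> w S1 \<le> w T"
    by (auto simp: revlex_less_def)
  from vx True obtain S2 where a2: "lk x S2 < lk v S2" and b2: "\<forall>T. lk v T \<noteq> lk x T \<longrightarrow> w S2 \<le> w T"
    by (auto simp: revlex_less_def)
  have S1: "S1 \<in> V" using lk_diff_keys[of u S1 v] a1 assms by auto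
  have S2: "S2 \<in> V" using lk_diff_keys[of v S2 x] a2 assms by auto
  have "\<exists>S. lk x S < lk u S \<and> (\<forall>T. lk u T \<noteq> lk x T \<longrightarrow> w S \<le> w T)"
  proof (cases "w S1 < w S2")
    case True
    have "lk v S1 = lk x S1" using b2 True by force
    then show ?thesis using a1 b1 b2 True
      by (intro exI[of _ S1]) (metis le_less_trans less_le_not_le nat_le_linear)
  next
    case False
    show ?thesis
    proof (cases "w S2 < w S1")
      case True
      have "lk u S2 = lk v S2" using b1 True by force
      then show ?thesis using a2 b1 b2 True
        by (intro exI[of _ S2]) (metis le_less_trans less_le_not_le nat_le_linear)
    next
      case False
      with \<open>\<not> w S1 < w S2\<close> have "w S1 = w S2" by simp
      then have "S1 = S2" using inj S1 S2 by (auto dest: inj_onD)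
      then show ?thesis using a1 a2 b1 b2
        by (intro exI[of _ S1]) (metis le_less_trans less_le_not_le nat_le_linear order.strict_trans)
    qed
  qed
  then show ?thesis using True by (simp add: revlex_less_def)
qed

lemma exists_max:
  assumes inj: "inj_on w V" and fin: "finite A" and ne: "A \<noteq> {}" and AV: "\<forall>m\<in>A. ks m \<subseteq> V"
  shows "\<exists>m\<in>A. \<forall>m'\<in>A. m' \<noteq> m \<longrightarrow> revlex_less w m' m"
  using fin ne AV
proof (induction A rule: finite_ne_induct)
  case (singleton x) then show ?case by auto
next
  case (insert x F)
  then obtain m where m: "m \<in> F" "\<forall>m'\<in>F. m' \<noteq> m \<longrightarrow> revlex_less w m' m" by auto
  show ?case
  proof (cases "x = m")
    case True then show ?thesis using m by auto
  next
    case False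
    then have "revlex_less w x m \<or> revlex_less w m x"
      using rl_total[OF inj, of x m] insert.prems m by auto
    then show ?thesis
    proof
      assume "revlex_less w x m" then show ?thesis using m by auto
    next
      assume mx: "revlex_less w m x"
      have "\<forall>m'\<in>insert x F. m' \<noteq> x \<longrightarrow> revlex_less w m' x"
      proof (intro ballI impI)
        fix m' assume "m' \<in> insert x F" "m' \<noteq> x"
        then have "m' \<in> F" by auto
        show "revlex_less w m' x"
        proof (cases "m' = m")
          case True then show ?thesis using mx by simp
        next
          case False
          then show ?thesis using rl_trans[OF inj, of m' m x] m \<open>m' \<in> F\<close> mx insert.prems by auto
        qed
      qed
      then show ?thesis by auto
    qed
  qed
qed

lemma lead_mon_unique:
  assumes inj: "inj_on w V" and r: "in_ring V p" and m: "m \<in> ks p"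
    and mx: "\<forall>m'\<in>ks p. m' \<noteq> m \<longrightarrow> revlex_less w m' m"
  shows "lead_mon w p = m"
  unfolding lead_mon_def
proof (rule the_equality)
  show "m \<in> ks p \<and> (\<forall>m'\<in>ks p. m' \<noteq> m \<longrightarrow> revlex_less w m' m)" using m mx by auto
next
  fix m2 assume h: "m2 \<in> ks p \<and> (\<forall>m'\<in>ks p. m' \<noteq> m2 \<longrightarrow> revlex_less w m' m2)"
  show "m2 = m"
  proof (rule ccontr)
    assume "m2 \<noteq> m"
    then have "revlex_less w m2 m" "revlex_less w m m2" using h mx m by auto
    moreover have "ks m \<subseteq> V" "ks m2 \<subseteq> V" using r m h by (auto simp: in_ring_def)
    ultimately show False using rl_asym[OF inj] by blast
  qed
qed

lemma lead_mon_prop: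
  assumes inj: "inj_on w V" and r: "in_ring V p" and p: "p \<noteq> 0"
  shows "lead_mon w p \<in> ks p \<and> (\<forall>m'\<in>ks p. m' \<noteq> lead_mon w p \<longrightarrow> revlex_less w m' (lead_mon w p))"
proof -
  obtain m where "m \<in> ks p" "\<forall>m'\<in>ks p. m' \<noteq> m \<longrightarrow> revlex_less w m' m"
    using exists_max[OF inj, of "ks p"] p r by (auto simp: in_ring_def)
  with lead_mon_unique[OF inj r] show ?thesis by auto
qed


lemma single_mult_expand: "sg a c * p = (\<Sum>m\<in>ks p. sg (a + m) (c * lk p m))"
proof -
  have "sg a c * p = sg a c * (\<Sum>m\<in>ks p. sg m (lk p m))" by (simp add: pm_sum_single)
  also have "\<dots> = (\<Sum>m\<in>ks p. sg (a + m) (c * lk p m))" by (simp add: sum_distrib_left mult_single)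
  finally show ?thesis .
qed

lemma lookup_single_mult: "lk (sg (a::'x \<Rightarrow>\<^sub>0 nat) c * p) (a + m) = (c::'k::comm_ring_1) * lk p m"
proof -
  have "lk (sg a c * p) (a + m) = (\<Sum>m'\<in>ks p. if m' = m then c * lk p m' else 0)"
    by (simp add: single_mult_expand lookup_sum lookup_single when_def add_left_cancel)
  also have "\<dots> = c * lk p m" by (auto simp: in_keys_iff)
  finally show ?thesis .
qed

lemma keys_single1_mult: "ks (sg (a::'x \<Rightarrow>\<^sub>0 nat) (1::'k::comm_ring_1) * p) = (\<lambda>m. a + m) ` ks p"
proof
  show "ks (sg a (1::'k) * p) \<subseteq> (\<lambda>m. a + m) ` ks p"
    using keys_mult[of "sg a (1::'k)" p] by auto
  show "(\<lambda>m. a + m) ` ks p \<subseteq> ks (sg a (1::'k) * p)"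
    by (auto simp: in_keys_iff lookup_single_mult)
qed

lemma single1_mult_cancel:
  assumes "sg (a::'x \<Rightarrow>\<^sub>0 nat) (1::'k::comm_ring_1) * p = sg a 1 * q" shows "p = q"
proof (rule poly_mapping_eqI)
  fix m show "lk p m = lk q m" using lookup_single_mult[of a "1::'k" p m] lookup_single_mult[of a "1::'k" q m] assms by simp
qed

lemma single1_mult_eq0: "sg (a::'x \<Rightarrow>\<^sub>0 nat) (1::'k::comm_ring_1) * p = 0 \<longleftrightarrow> p = 0"
  using single1_mult_cancel[of a p 0] by auto

lemma mon_poly_mult: "mon_poly a * mon_poly b = mon_poly (a + b)"
  by (simp add: mon_poly_def mult_single)

lemma var_pow: "(var S :: 'k::comm_ring_1 pol) ^ k = sg (sg S k) 1"
proof (induction k)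
  case 0 then show ?case by (simp add: one_poly_mapping.abs_eq single.abs_eq)
next
  case (Suc k) then show ?case by (simp add: var_def mult_single single_add[symmetric] add.commute)
qed

lemma rl_shift: "revlex_less w (a + u) (a + v) = revlex_less w u v"
  by (simp add: revlex_less_def mdeg_add lookup_add)

lemma in_ring_add: "in_ring V p \<Longrightarrow> in_ring V q \<Longrightarrow> in_ring V (p + q)"
  using keys_add[of p q] by (auto simp: in_ring_def)

lemma in_ring_mult: assumes "in_ring V p" "in_ring V q" shows "in_ring V (p * q)"
  unfolding in_ring_def
proof
  fix m assume "m \<in> ks (p*q)"
  then obtain a b where "m = a + b" "a \<in> ks p" "b \<in> ks q" using keys_mult[of p q] by blast
  then show "ks m \<subseteq> V" using assms keys_add[of a b] unfolding in_ring_def by blast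
qed

lemma in_ring_single: "ks m \<subseteq> V \<Longrightarrow> in_ring V (sg m c)"
  by (simp add: in_ring_def)

lemma in_ring_const: "in_ring V (sg 0 c)"
  by (simp add: in_ring_def)

lemma in_ring_uminus: "in_ring V p \<Longrightarrow> in_ring V (- p)"
  by (simp add: in_ring_def)

lemma in_ring_diff: "in_ring V p \<Longrightarrow> in_ring V q \<Longrightarrow> in_ring V (p - q)"
  using keys_diff[of p q] by (auto simp: in_ring_def)

lemma in_ring_sum: "(\<And>a. a \<in> A \<Longrightarrow> in_ring V (f a)) \<Longrightarrow> in_ring V (sum f A)"
proof (induction A rule: infinite_finite_induct)
  case (infinite A) then show ?case by (simp add: in_ring_def)
next
  case empty then show ?case by (simp add: in_ring_def)
next
  case (insert x F) then show ?case by (simp add: in_ring_add)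
qed

lemma in_ring_var: "S \<in> V \<Longrightarrow> in_ring V (var S)"
  by (simp add: var_def in_ring_def)

lemma in_ring_mon_poly: "ks m \<subseteq> V \<Longrightarrow> in_ring V (mon_poly m)"
  by (simp add: mon_poly_def in_ring_def)

lemma in_ring_pow: "in_ring V p \<Longrightarrow> in_ring V (p ^ k)"
proof (induction k)
  case 0 then show ?case by (simp add: in_ring_def)
next
  case (Suc k) then show ?case by (simp add: in_ring_mult)
qed

lemma ideal_mono: "F \<subseteq> ideal_in V F' \<Longrightarrow> ideal_in V F \<subseteq> ideal_in V F'"
proof
  fix p assume F: "F \<subseteq> ideal_in V F'" and p: "p \<in> ideal_in V F"
  from p show "p \<in> ideal_in V F'"
    by (induction rule: ideal_in.induct) (use F in \<open>auto intro: ideal_in.intros\<close>)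
qed

lemma ideal_neg: "(p::'k::comm_ring_1 pol) \<in> ideal_in V F \<Longrightarrow> - p \<in> ideal_in V F"
proof -
  assume p: "p \<in> ideal_in V F"
  have "(sg 0 (-1)) * p \<in> ideal_in V F" by (rule ideal_in.mult[OF in_ring_const p])
  moreover have "(sg 0 (-1)) * p = - p"
    by (simp add: single_uminus)
  ultimately show ?thesis by simp
qed

lemma ideal_diff: "p \<in> ideal_in V F \<Longrightarrow> q \<in> ideal_in V F \<Longrightarrow> p - q \<in> ideal_in V F"
  using ideal_in.add[of p V F "- q"] ideal_neg by fastforce

lemma ideal_sum: "(\<And>a. a \<in> A \<Longrightarrow> f a \<in> ideal_in V F) \<Longrightarrow> sum f A \<in> ideal_in V F"
  by (induction A rule: infinite_finite_induct) (auto intro: ideal_in.intros)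

lemma ideal_multr: "p \<in> ideal_in V F \<Longrightarrow> in_ring V q \<Longrightarrow> p * q \<in> ideal_in V F"
  by (metis ideal_in.mult mult.commute)

lemma ideal_in_ring: "(\<And>f. f \<in> F \<Longrightarrow> in_ring V f) \<Longrightarrow> p \<in> ideal_in V F \<Longrightarrow> in_ring V p"
proof -
  assume F: "\<And>f. f \<in> F \<Longrightarrow> in_ring V f" and p: "p \<in> ideal_in V F"
  from p show "in_ring V p"
  proof (induction rule: ideal_in.induct)
    case zero then show ?case by (simp add: in_ring_def)
  next
    case (gen f) then show ?case by (rule F)
  next
    case (add p q) then show ?case by (simp add: in_ring_add)
  next
    case (mult q p) then show ?case by (simp add: in_ring_mult)
  qed
qed

lemma lead_mult:
  assumes inj: "inj_on w V" and r: "in_ring V p" and p: "p \<noteq> 0" and a: "ks a \<subseteq> V"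
  shows "lead_mon w (sg a (1::'k::comm_ring_1) * p) = a + lead_mon w p"
proof -
  have L: "lead_mon w p \<in> ks p" "\<forall>m'\<in>ks p. m' \<noteq> lead_mon w p \<longrightarrow> revlex_less w m' (lead_mon w p)"
    using lead_mon_prop[OF inj r p] by auto
  have r2: "in_ring V (sg a (1::'k) * p)" using in_ring_mult[OF in_ring_single[OF a] r] .
  show ?thesis
  proof (rule lead_mon_unique[OF inj r2])
    show "a + lead_mon w p \<in> ks (sg a (1::'k) * p)" using L by (simp add: keys_single1_mult)
    show "\<forall>m'\<in>ks (sg a (1::'k) * p). m' \<noteq> a + lead_mon w p \<longrightarrow> revlex_less w m' (a + lead_mon w p)"
      using L by (auto simp: keys_single1_mult rl_shift)
  qed
qed


definition pmap :: "('a \<Rightarrow> 'b) \<Rightarrow> ('a \<Rightarrow>\<^sub>0 'c::comm_ring_1) \<Rightarrow> ('b \<Rightarrow>\<^sub>0 'c)" where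
  "pmap \<phi> p = (\<Sum>m\<in>ks p. sg (\<phi> m) (lk p m))"

lemma pmap_add: "pmap \<phi> (p + q) = pmap \<phi> p + pmap \<phi> q"
  unfolding pmap_def by (rule keysum_add) (auto simp: single_add)

lemma pmap_zero[simp]: "pmap \<phi> 0 = 0"
  by (simp add: pmap_def)

lemma pmap_single[simp]: "pmap \<phi> (sg a c) = sg (\<phi> a) c"
  by (simp add: pmap_def)

lemma pmap_sum: "pmap \<phi> (sum f A) = (\<Sum>a\<in>A. pmap \<phi> (f a))"
  by (induction A rule: infinite_finite_induct) (auto simp: pmap_add)

lemma pmap_uminus: "pmap \<phi> (- p) = - pmap \<phi> p"
  by (metis add.right_inverse add_eq_0_iff pmap_add pmap_zero)

lemma pmap_diff: "pmap \<phi> (p - q) = pmap \<phi> p - pmap \<phi> q"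
  by (metis diff_conv_add_uminus pmap_add pmap_uminus)

lemma pmap_mult:
  assumes hom: "\<And>a b. \<phi> (a + b) = \<phi> a + \<phi> b"
  shows "pmap \<phi> (p * q) = pmap \<phi> p * pmap \<phi> q"
proof -
  have "p * q = (\<Sum>a\<in>ks p. sg a (lk p a)) * (\<Sum>b\<in>ks q. sg b (lk q b))" by (simp add: pm_sum_single)
  also have "\<dots> = (\<Sum>a\<in>ks p. \<Sum>b\<in>ks q. sg (a + b) (lk p a * lk q b))"
    by (simp add: sum_product mult_single)
  finally have pq: "p * q = (\<Sum>a\<in>ks p. \<Sum>b\<in>ks q. sg (a + b) (lk p a * lk q b))" .
  have "pmap \<phi> (p * q) = (\<Sum>a\<in>ks p. \<Sum>b\<in>ks q. sg (\<phi> a + \<phi> b) (lk p a * lk q b))"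
    by (simp add: pq pmap_sum hom)
  also have "\<dots> = pmap \<phi> p * pmap \<phi> q"
    by (simp add: pmap_def sum_product mult_single)
  finally show ?thesis .
qed

lemma pi_mon_add: "pi_mon (a + b) = pi_mon a + pi_mon b"
  unfolding pi_mon_def
  by (rule keysum_add) (auto simp: single_add sum.distrib add_ac)

lemma pi_map_pmap: "pi_map p = pmap pi_mon p"
  by (simp add: pi_map_def pmap_def)

lemma pi_map_mult: "pi_map (p * q) = pi_map p * pi_map q"
  by (simp add: pi_map_pmap pmap_mult pi_mon_add)

lemma pi_mon_single: "pi_mon (sg S n) = sg None n + (\<Sum>j\<in>S. sg (Some j) n)"
  by (simp add: pi_mon_def)

lemma stable_sub: "S \<in> stable_sets d E \<Longrightarrow> T \<subseteq> S \<Longrightarrow> T \<in> stable_sets d E"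
  unfolding stable_sets_def by blast

lemma stable_empty: "simple_graph d E \<Longrightarrow> {} \<in> stable_sets d E"
  by (auto simp: stable_sets_def simple_graph_def)

lemma stable_finite: "S \<in> stable_sets d E \<Longrightarrow> finite S"
  by (auto simp: stable_sets_def intro: finite_subset)

lemma IG_ideal:
  assumes F: "\<And>f. f \<in> F \<Longrightarrow> f \<in> I_G d E"
  shows "ideal_in (stable_sets d E) F \<subseteq> I_G d E"
proof
  fix p assume "p \<in> ideal_in (stable_sets d E) F"
  then show "p \<in> I_G d E"
  proof (induction rule: ideal_in.induct)
    case zero then show ?case by (simp add: I_G_def in_ring_def pi_map_pmap)
  next
    case (gen f) then show ?case by (rule F)
  next
    case (add p q) then show ?case by (simp add: I_G_def in_ring_add pi_map_pmap pmap_add)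
  next
    case (mult q p) then show ?case by (simp add: I_G_def in_ring_mult pi_map_mult)
  qed
qed

definition hom2 :: "'k::comm_ring_1 pol set \<Rightarrow> bool" where
  "hom2 F \<longleftrightarrow> (\<forall>f\<in>F. \<forall>m\<in>ks f. mdeg m = 2)"

definition Jgens :: "nat \<Rightarrow> nat set set \<Rightarrow> 'k::comm_ring_1 pol set" where
  "Jgens d E = {var S1 * var S2 - var S3 * var S4 | S1 S2 S3 S4.
        S1 \<in> stable_sets d E \<and> S2 \<in> stable_sets d E \<and> S3 \<in> stable_sets d E \<and> S4 \<in> stable_sets d E
        \<and> S1 \<inter> S2 = {} \<and> S3 \<inter> S4 = {} \<and> S1 \<union> S2 = S3 \<union> S4}"

definition Lgens :: "nat \<Rightarrow> nat set set \<Rightarrow> 'k::comm_ring_1 pol set" where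
  "Lgens d E = {var (S - {i}) * var {i} - var S * var {} | S i.
        S \<in> stable_sets d E \<and> i \<in> S \<and> card S \<ge> 2}"

lemma J_G_gens: "J_G d E = ideal_in (stable_sets d E) (Jgens d E)"
  by (simp add: J_G_def Jgens_def)

lemma L_G_gens: "L_G d E = ideal_in (stable_sets d E) (Lgens d E)"
  by (simp add: L_G_def Lgens_def)

lemma var_mult: "var S1 * var S2 = sg (sg S1 1 + sg S2 1) 1"
  by (simp add: var_def mult_single)

lemma pi_var2:
  assumes "finite S1" "finite S2" "S1 \<inter> S2 = {}"
  shows "pi_map (var S1 * var S2 :: 'k::comm_ring_1 pol) = sg (sg None 2 + (\<Sum>j\<in>S1 \<union> S2. sg (Some j) 1)) 1"
proof -
  have two: "sg None (2::nat) = sg None 1 + sg None 1" by (metis one_add_one single_add)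
  have "pi_mon (sg S1 1 + sg S2 1) = sg None 2 + (\<Sum>j\<in>S1 \<union> S2. sg (Some j) 1)"
    using assms by (simp add: pi_mon_add pi_mon_single sum.union_disjoint two add_ac)
  then show ?thesis by (simp add: var_mult pi_map_pmap)
qed

lemma Jgens_IG2: "(f::'k::comm_ring_1 pol) \<in> Jgens d E \<Longrightarrow> f \<in> I_G_2 d E"
proof -
  assume "f \<in> Jgens d E"
  then have "\<exists>S1 S2 S3 S4. f = var S1 * var S2 - var S3 * var S4 \<and>
        S1 \<in> stable_sets d E \<and> S2 \<in> stable_sets d E \<and> S3 \<in> stable_sets d E \<and> S4 \<in> stable_sets d E
        \<and> S1 \<inter> S2 = {} \<and> S3 \<inter> S4 = {} \<and> S1 \<union> S2 = S3 \<union> S4"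
    unfolding Jgens_def by (simp only: mem_Collect_eq)
  then obtain S1 S2 S3 S4 where f: "f = var S1 * var S2 - var S3 * var S4"
    and st: "S1 \<in> stable_sets d E" "S2 \<in> stable_sets d E" "S3 \<in> stable_sets d E" "S4 \<in> stable_sets d E"
    and dj: "S1 \<inter> S2 = {}" "S3 \<inter> S4 = {}" and un: "S1 \<union> S2 = S3 \<union> S4"
    by (elim exE conjE)
  have fin: "finite S1" "finite S2" "finite S3" "finite S4" using st stable_finite by auto
  have ring: "in_ring (stable_sets d E) f"
    unfolding f by (intro in_ring_diff in_ring_mult in_ring_var st)
  have "pi_map f = pi_map (var S1 * var S2 :: 'k pol) - pi_map (var S3 * var S4 :: 'k pol)"
    unfolding f pi_map_pmap by (rule pmap_diff)
  also have "\<dots> = 0"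
  proof -
    have e1: "pi_map (var S1 * var S2 :: 'k pol) = sg (sg None 2 + (\<Sum>j\<in>S1 \<union> S2. sg (Some j) 1)) 1"
      by (rule pi_var2) (use fin dj in auto)
    have e2: "pi_map (var S3 * var S4 :: 'k pol) = sg (sg None 2 + (\<Sum>j\<in>S3 \<union> S4. sg (Some j) 1)) 1"
      by (rule pi_var2) (use fin dj in auto)
    show ?thesis by (simp only: e1 e2 un diff_self)
  qed
  finally have pi: "pi_map f = 0" .
  have deg: "\<forall>m\<in>ks f. mdeg m = 2"
  proof
    fix m assume "m \<in> ks f"
    then have "m \<in> ks (var S1 * var S2 :: 'k pol) \<union> ks (var S3 * var S4 :: 'k pol)"
      using keys_diff[of "var S1 * var S2 :: 'k pol" "var S3 * var S4"] unfolding f by blast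
    then have "m = sg S1 1 + sg S2 1 \<or> m = sg S3 1 + sg S4 1" unfolding var_mult by (simp split: if_splits) blast
    then show "mdeg m = 2" by (auto simp: mdeg_add)
  qed
  show ?thesis using ring pi deg by (simp add: I_G_2_def I_G_def)
qed

lemma Lgens_Jgens: "simple_graph d E \<Longrightarrow> (f::'k::comm_ring_1 pol) \<in> Lgens d E \<Longrightarrow> f \<in> Jgens d E"
proof -
  assume sg: "simple_graph d E" and "f \<in> Lgens d E"
  then have "\<exists>S i. f = var (S - {i}) * var {i} - var S * var {} \<and> S \<in> stable_sets d E \<and> i \<in> S \<and> card S \<ge> 2"
    unfolding Lgens_def by (simp only: mem_Collect_eq)
  then obtain S i where f: "f = var (S - {i}) * var {i} - var S * var {}" and S: "S \<in> stable_sets d E" "i \<in> S"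
    by (elim exE conjE)
  have "S - {i} \<in> stable_sets d E" "{i} \<in> stable_sets d E" using S stable_sub by auto
  moreover have "{} \<in> stable_sets d E" using stable_empty[OF sg] .
  ultimately show ?thesis unfolding Jgens_def f mem_Collect_eq using S
    by (intro exI[of _ "S - {i}"] exI[of _ "{i}"] exI[of _ S] exI[of _ "{}"]) auto
qed

lemma chain:
  assumes sg: "simple_graph d E"
  shows "L_G d E \<subseteq> (J_G d E :: 'k::comm_ring_1 pol set)"
    and "J_G d E \<subseteq> ideal_in (stable_sets d E) (I_G_2 d E :: 'k pol set)"
    and "ideal_in (stable_sets d E) (I_G_2 d E) \<subseteq> (I_G d E :: 'k pol set)"
proof -
  show "L_G d E \<subseteq> (J_G d E :: 'k::comm_ring_1 pol set)"
    unfolding L_G_gens J_G_gens by (rule ideal_mono) (use Lgens_Jgens[OF sg] in \<open>auto intro: ideal_in.gen\<close>)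
  show "J_G d E \<subseteq> ideal_in (stable_sets d E) (I_G_2 d E :: 'k pol set)"
    unfolding J_G_gens by (rule ideal_mono) (use Jgens_IG2 in \<open>auto intro: ideal_in.gen\<close>)
  show "ideal_in (stable_sets d E) (I_G_2 d E) \<subseteq> (I_G d E :: 'k pol set)"
    by (rule IG_ideal) (simp add: I_G_2_def)
qed

lemma hom2_IG2: "hom2 (I_G_2 d E)" by (simp add: hom2_def I_G_2_def)
lemma hom2_J: "hom2 (Jgens d E)"
  unfolding hom2_def proof (intro ballI)
  fix f m assume "f \<in> Jgens d E" "m \<in> ks f"
  then show "mdeg m = 2" using Jgens_IG2[of f d E] by (simp add: I_G_2_def)
qed
lemma hom2_L: "simple_graph d E \<Longrightarrow> hom2 (Lgens d E)"
  using hom2_J[of d E] Lgens_Jgens[of d E] unfolding hom2_def by blast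

lemma ring_IG2: "f \<in> I_G_2 d E \<Longrightarrow> in_ring (stable_sets d E) f" by (simp add: I_G_2_def I_G_def)
lemma ring_J: "f \<in> Jgens d E \<Longrightarrow> in_ring (stable_sets d E) f" using Jgens_IG2 ring_IG2 by blast
lemma ring_L: "simple_graph d E \<Longrightarrow> f \<in> Lgens d E \<Longrightarrow> in_ring (stable_sets d E) f" using Lgens_Jgens ring_J by blast


definition bmon :: "mon \<Rightarrow> mon" where
  "bmon m = (\<Sum>S\<in>ks m. \<Sum>j\<in>S. sg {j} (lk m S))"

definition wt :: "mon \<Rightarrow> nat" where "wt m = mdeg (bmon m)"

lemma bmon_add: "bmon (a + b) = bmon a + bmon b"
  unfolding bmon_def by (rule keysum_add) (auto simp: single_add sum.distrib)

lemma bmon_single: "bmon (sg S 1) = (\<Sum>j\<in>S. sg {j} 1)"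
  by (simp add: bmon_def)

lemma bmon_zero[simp]: "bmon 0 = 0" by (simp add: bmon_def)

lemma mdeg_sum: "mdeg (sum f A) = (\<Sum>a\<in>A. mdeg (f a))"
  by (induction A rule: infinite_finite_induct) (auto simp: mdeg_add)

lemma wt_add: "wt (a + b) = wt a + wt b"
  by (simp add: wt_def bmon_add mdeg_add)

lemma wt_single: "finite S \<Longrightarrow> wt (sg S 1) = card S"
  unfolding wt_def bmon_single by (simp add: mdeg_sum)

lemma single_sum_same: "(\<Sum>x\<in>A. sg k (g x)) = sg k (sum g A)"
  by (induction A rule: infinite_finite_induct) (auto simp: single_add)

lemma cong_mult:
  assumes "a - b \<in> ideal_in V F" "c - d \<in> ideal_in V F" "in_ring V b" "in_ring V c"
  shows "a * c - b * d \<in> ideal_in V F"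
proof -
  have "a * c - b * d = (a - b) * c + b * (c - d)" by (simp add: algebra_simps)
  then show ?thesis using assms by (metis ideal_in.add ideal_in.mult ideal_multr)
qed

context
  fixes d :: nat and E :: "nat set set"
  assumes sgr: "simple_graph d E"
begin

abbreviation "VV \<equiv> stable_sets d E"

lemma C1:
  assumes "S \<in> VV"
  shows "(mon_poly (sg {} (card S) + sg S 1) - mon_poly (sg {} 1 + (\<Sum>j\<in>S. sg {j} 1)) :: 'k::comm_ring_1 pol)
           \<in> L_G d E"
  using assms
proof (induction "card S" arbitrary: S)
  case 0
  then have "S = {}" using stable_finite by auto
  then show ?case by (simp add: ideal_in.zero L_G_def)
next
  case (Suc n)
  have finS: "finite S" using Suc.prems stable_finite by auto
  show ?case
  proof (cases "n = 0")
    case True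
    then obtain i where "S = {i}" using Suc.hyps(2) card_1_singletonE by (metis One_nat_def)
    then show ?thesis by (simp add: ideal_in.zero L_G_def add.commute)
  next
    case False
    obtain i where i: "i \<in> S" using Suc.hyps(2) by (metis card.empty card_eq_0_iff ex_in_conv nat.simps(3))
    define T where "T = S - {i}"
    have cT: "card T = n" using Suc.hyps(2) i finS by (simp add: T_def)
    have TV: "T \<in> VV" using Suc.prems stable_sub T_def by auto
    have iV: "{i} \<in> VV" using Suc.prems stable_sub i by auto
    have eV: "{} \<in> VV" using stable_empty[OF sgr] .
    have IH: "(mon_poly (sg {} n + sg T 1) - mon_poly (sg {} 1 + (\<Sum>j\<in>T. sg {j} 1)) :: 'k pol) \<in> L_G d E"
      using Suc.hyps(1)[OF cT[symmetric] TV] cT by simp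
    have gen: "(var T * var {i} - var S * var {} :: 'k pol) \<in> L_G d E"
      unfolding L_G_def using Suc.hyps(2) False i Suc.prems T_def
      by (intro ideal_in.gen CollectI exI[of _ S] exI[of _ i]) auto
    define A :: "'k pol" where "A = mon_poly (sg {} n)"
    define B :: "'k pol" where "B = mon_poly (sg {} 1 + (\<Sum>j\<in>T. sg {j} 1))"
    have sn: "sg {} (Suc n) = sg {} n + sg {} (1::nat)" by (simp add: single_add[symmetric])
    have h1: "mon_poly (sg {} (Suc n) + sg S 1) = A * var S * var {}"
      by (simp add: A_def var_def mon_poly_def mult_single sn add_ac)
    have sS: "(\<Sum>j\<in>S. sg {j} (1::nat)) = sg {i} 1 + (\<Sum>j\<in>T. sg {j} 1)"
      using finS i by (simp add: T_def sum.remove)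
    have h2: "mon_poly (sg {} 1 + (\<Sum>j\<in>S. sg {j} 1)) = B * var {i}"
      unfolding B_def var_def mon_poly_def sS by (simp add: mult_single add_ac)
    have h3: "mon_poly (sg {} n + sg T 1) = A * var T"
      by (simp add: A_def var_def mon_poly_def mult_single)
    have eq: "mon_poly (sg {} (Suc n) + sg S 1) - mon_poly (sg {} 1 + (\<Sum>j\<in>S. sg {j} 1))
        = (mon_poly (sg {} n + sg T 1) - B) * var {i} - A * (var T * var {i} - var S * var {})"
      unfolding h1 h2 h3 by (simp add: algebra_simps)
    have AR: "in_ring VV A" unfolding A_def using eV by (intro in_ring_mon_poly) auto
    show ?thesis
      unfolding eq Suc.hyps(2)[symmetric] L_G_gens
      apply (rule ideal_diff)
       apply (rule ideal_multr)
        apply (use IH B_def in \<open>simp add: L_G_gens\<close>)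
       apply (rule in_ring_var[OF iV])
      apply (rule ideal_in.mult[OF AR])
      apply (use gen in \<open>simp add: L_G_gens\<close>)
      done
  qed
qed

lemma keys_e0: "ks (m::mon) \<subseteq> VV \<Longrightarrow> ks (sg {} k + m) \<subseteq> VV"
  using keys_add[of "sg {} k" m] stable_empty[OF sgr] by (auto split: if_splits)

lemma C2:
  assumes "ks m \<subseteq> VV"
  shows "(mon_poly (sg {} (wt m) + m) - mon_poly (sg {} (mdeg m) + bmon m) :: 'k::comm_ring_1 pol) \<in> L_G d E"
  using assms
proof (induction "mdeg m" arbitrary: m rule: less_induct)
  case less
  show ?case
  proof (cases "m = 0")
    case True then show ?thesis by (simp add: wt_def L_G_gens ideal_in.zero)
  next
    case False
    then obtain S where S: "S \<in> ks m" by (metis keys_eq_empty ex_in_conv)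
    define m' where "m' = m - sg S 1"
    have mm: "m = sg S 1 + m'"
      by (rule poly_mapping_eqI) (use S in \<open>auto simp: m'_def lookup_add lookup_minus lookup_single when_def in_keys_iff\<close>)
    have SV: "S \<in> VV" using S less.prems by auto
    have finS: "finite S" using SV stable_finite by auto
    have m'V: "ks m' \<subseteq> VV" using less.prems by (auto simp: m'_def in_keys_iff lookup_minus)
    have dm: "mdeg m = 1 + mdeg m'" using mm mdeg_add by (metis mdeg_single)
    have IH: "(mon_poly (sg {} (wt m') + m') - mon_poly (sg {} (mdeg m') + bmon m') :: 'k pol) \<in> L_G d E"
      using less.hyps[of m'] dm m'V by simp
    have c1: "(mon_poly (sg {} (card S) + sg S 1) - mon_poly (sg {} 1 + (\<Sum>j\<in>S. sg {j} 1)) :: 'k pol) \<in> L_G d E"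
      by (rule C1[OF SV])
    have bR: "in_ring VV (mon_poly (sg {} 1 + (\<Sum>j\<in>S. sg {j} 1)) :: 'k pol)"
    proof (rule in_ring_mon_poly)
      have "ks (\<Sum>j\<in>S. sg {j} (1::nat)) \<subseteq> VV" using keys_sum[of "\<lambda>j. sg {j} (1::nat)" S] SV stable_sub by auto
      then show "ks (sg {} (1::nat) + (\<Sum>j\<in>S. sg {j} 1)) \<subseteq> VV" by (rule keys_e0)
    qed
    have cR: "in_ring VV (mon_poly (sg {} (wt m') + m') :: 'k pol)"
      by (rule in_ring_mon_poly[OF keys_e0[OF m'V]])
    have X: "(mon_poly (sg {} (card S) + sg S 1) * mon_poly (sg {} (wt m') + m')
          - mon_poly (sg {} 1 + (\<Sum>j\<in>S. sg {j} 1)) * mon_poly (sg {} (mdeg m') + bmon m') :: 'k pol) \<in> L_G d E"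
      using cong_mult[OF c1[unfolded L_G_gens] IH[unfolded L_G_gens] bR cR] by (simp add: L_G_gens)
    have wm: "wt m = card S + wt m'" using mm wt_add wt_single[OF finS] by metis
    have bm: "bmon m = (\<Sum>j\<in>S. sg {j} 1) + bmon m'" using mm bmon_add bmon_single by metis
    have e1: "mon_poly (sg {} (card S) + sg S 1) * mon_poly (sg {} (wt m') + m') = (mon_poly (sg {} (wt m) + m) :: 'k pol)"
    proof -
      have "sg {} (card S) + sg S 1 + (sg {} (wt m') + m') = sg {} (card S + wt m') + (sg S 1 + m')"
        by (simp add: single_add add_ac)
      also have "\<dots> = sg {} (wt m) + m" using wm mm by simp
      finally show ?thesis by (simp add: mon_poly_mult)
    qed
    have e2: "mon_poly (sg {} 1 + (\<Sum>j\<in>S. sg {j} 1)) * mon_poly (sg {} (mdeg m') + bmon m') = (mon_poly (sg {} (mdeg m) + bmon m) :: 'k pol)"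
    proof -
      have "sg {} 1 + (\<Sum>j\<in>S. sg {j} 1) + (sg {} (mdeg m') + bmon m') = sg {} (1 + mdeg m') + ((\<Sum>j\<in>S. sg {j} 1) + bmon m')"
        by (simp only: single_add add_ac)
      also have "\<dots> = sg {} (mdeg m) + bmon m" using dm bm by simp
      finally show ?thesis by (simp add: mon_poly_mult)
    qed
    show ?thesis using X unfolding e1 e2 .
  qed
qed

lemma C3:
  assumes mV: "ks m \<subseteq> VV" and K: "wt m \<le> K"
  shows "(sg (sg {} K + m) c - sg (sg {} (K - wt m + mdeg m) + bmon m) c :: 'k::comm_ring_1 pol) \<in> L_G d E"
proof -
  have X: "(mon_poly (sg {} (wt m) + m) - mon_poly (sg {} (mdeg m) + bmon m) :: 'k pol) \<in> ideal_in VV (Lgens d E)"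
    using C2[OF mV] by (simp add: L_G_gens)
  have R: "in_ring VV (sg (sg {} (K - wt m)) c :: 'k pol)"
    using keys_e0[of 0 "K - wt m"] by (intro in_ring_single) simp
  have "sg (sg {} (K - wt m)) c * (mon_poly (sg {} (wt m) + m) - mon_poly (sg {} (mdeg m) + bmon m) :: 'k pol) \<in> ideal_in VV (Lgens d E)"
    by (rule ideal_in.mult[OF R X])
  moreover have "sg {} (K - wt m) + (sg {} (wt m) + m) = sg {} K + m"
    using K by (simp add: add.assoc[symmetric] single_add[symmetric])
  moreover have "sg {} (K - wt m) + (sg {} (mdeg m) + bmon m) = sg {} (K - wt m + mdeg m) + bmon m"
    by (simp add: add.assoc[symmetric] single_add[symmetric])
  ultimately show ?thesis by (simp add: mon_poly_def right_diff_distrib mult_single L_G_gens)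
qed

end

lemma lk_pi_None: "lk (pi_mon m) None = mdeg m"
  by (simp add: pi_mon_def mdeg_def lookup_sum lookup_add lookup_single when_def)

lemma lk_bmon_single: "lk (bmon m) {i} = lk (pi_mon m) (Some i)"
  by (simp add: pi_mon_def bmon_def lookup_sum lookup_add lookup_single when_def)

lemma lk_bmon_other: "\<not> (\<exists>i. T = {i}) \<Longrightarrow> lk (bmon m) T = 0"
  by (auto simp add: bmon_def lookup_sum lookup_single when_def intro!: sum.neutral)

lemma bmon_pi: "pi_mon m1 = pi_mon m2 \<Longrightarrow> bmon m1 = bmon m2"
proof (rule poly_mapping_eqI)
  fix T assume "pi_mon m1 = pi_mon m2"
  then show "lk (bmon m1) T = lk (bmon m2) T"
    by (cases "\<exists>i. T = {i}") (auto simp: lk_bmon_single lk_bmon_other)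
qed

lemma mdeg_pi: "pi_mon m1 = pi_mon m2 \<Longrightarrow> mdeg m1 = mdeg m2"
  by (metis lk_pi_None)

lemma lk_pi_map: "lk (pi_map f) e = (\<Sum>m\<in>{m \<in> ks f. pi_mon m = e}. lk f m)"
  by (simp add: pi_map_def lookup_sum lookup_single when_def sum.inter_filter eq_commute)

lemma saturation:
  assumes sgr: "simple_graph d E" and f: "f \<in> I_G d E"
  shows "\<exists>K. (var {} ^ K * f :: 'k::comm_ring_1 pol) \<in> L_G d E"
proof -
  have fr: "in_ring (stable_sets d E) f" and pf: "pi_map f = 0" using f by (auto simp: I_G_def)
  define K where "K = (\<Sum>m\<in>ks f. wt m)"
  define \<Phi> where "\<Phi> m = sg {} (K - wt m + mdeg m) + bmon m" for m
  have Kge: "wt m \<le> K" if "m \<in> ks f" for m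
    unfolding K_def using that by (intro member_le_sum) auto
  have e1: "var {} ^ K * f = (\<Sum>m\<in>ks f. sg (sg {} K + m) (lk f m))"
    by (simp add: var_pow single_mult_expand)
  have "(\<Sum>m\<in>ks f. sg (sg {} K + m) (lk f m) - sg (\<Phi> m) (lk f m)) \<in> ideal_in (stable_sets d E) (Lgens d E)"
  proof (rule ideal_sum)
    fix m assume m: "m \<in> ks f"
    have "ks m \<subseteq> stable_sets d E" using fr m by (auto simp: in_ring_def)
    then show "sg (sg {} K + m) (lk f m) - sg (\<Phi> m) (lk f m) \<in> ideal_in (stable_sets d E) (Lgens d E)"
      using C3[OF sgr _ Kge[OF m], of "lk f m"] by (simp add: \<Phi>_def L_G_gens)
  qed
  then have D: "var {} ^ K * f - (\<Sum>m\<in>ks f. sg (\<Phi> m) (lk f m)) \<in> L_G d E"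
    by (simp add: e1 sum_subtractf L_G_gens)
  have z: "(\<Sum>m\<in>ks f. sg (\<Phi> m) (lk f m)) = (0 :: 'k pol)"
  proof -
    have "(\<Sum>m\<in>ks f. sg (\<Phi> m) (lk f m)) =
        (\<Sum>e\<in>pi_mon ` ks f. \<Sum>m\<in>{m. m \<in> ks f \<and> pi_mon m = e}. sg (\<Phi> m) (lk f m))"
      by (rule sum.image_gen) simp
    also have "\<dots> = 0"
    proof (rule sum.neutral, rule ballI)
      fix e assume "e \<in> pi_mon ` ks f"
      then obtain m0 where m0: "m0 \<in> ks f" "e = pi_mon m0" by auto
      have "(\<Sum>m\<in>{m. m \<in> ks f \<and> pi_mon m = e}. sg (\<Phi> m) (lk f m))
          = (\<Sum>m\<in>{m. m \<in> ks f \<and> pi_mon m = e}. sg (\<Phi> m0) (lk f m))"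
      proof (rule sum.cong[OF refl])
        fix m assume "m \<in> {m. m \<in> ks f \<and> pi_mon m = e}"
        then have "pi_mon m = pi_mon m0" using m0 by auto
        then have "\<Phi> m = \<Phi> m0" unfolding \<Phi>_def wt_def using bmon_pi mdeg_pi by metis
        then show "sg (\<Phi> m) (lk f m) = sg (\<Phi> m0) (lk f m)" by simp
      qed
      also have "\<dots> = sg (\<Phi> m0) (\<Sum>m\<in>{m. m \<in> ks f \<and> pi_mon m = e}. lk f m)"
        by (rule single_sum_same)
      also have "(\<Sum>m\<in>{m. m \<in> ks f \<and> pi_mon m = e}. lk f m) = lk (pi_map f) e"
        by (simp add: lk_pi_map)
      finally show "(\<Sum>m\<in>{m. m \<in> ks f \<and> pi_mon m = e}. sg (\<Phi> m) (lk f m)) = 0"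
        by (simp add: pf)
    qed
    finally show ?thesis .
  qed
  show ?thesis using D z by auto
qed


definition hcomp :: "nat \<Rightarrow> 'k::comm_ring_1 pol \<Rightarrow> 'k pol" where
  "hcomp n p = (\<Sum>m\<in>ks p. sg m (if mdeg m = n then lk p m else 0))"

lemma lk_hcomp: "lk (hcomp n p) m = (if mdeg m = n then lk p m else 0)"
proof -
  have "lk (hcomp n p) m = (\<Sum>x\<in>ks p. if x = m then (if mdeg x = n then lk p x else 0) else 0)"
    by (simp add: hcomp_def lookup_sum lookup_single when_def)
  also have "\<dots> = (if mdeg m = n then lk p m else 0)"
    by (simp add: sum.delta in_keys_iff)
  finally show ?thesis .
qed

lemma hcomp_add: "hcomp n (p + q) = hcomp n p + hcomp n q"
  by (rule poly_mapping_eqI) (simp add: lk_hcomp lookup_add)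

lemma hcomp_zero[simp]: "hcomp n 0 = 0"
  by (simp add: hcomp_def)

lemma hcomp_sum: "hcomp n (sum f A) = (\<Sum>a\<in>A. hcomp n (f a))"
  by (induction A rule: infinite_finite_induct) (auto simp: hcomp_add)

lemma hcomp_single: "hcomp n (sg x v) = (if mdeg x = n then sg x v else 0)"
  by (rule poly_mapping_eqI) (simp add: lk_hcomp lookup_single when_def)

lemma hcomp_hom:
  assumes "\<forall>m\<in>ks f. mdeg m = k"
  shows "hcomp n f = (if n = k then f else 0)"
  by (rule poly_mapping_eqI) (use assms in \<open>auto simp: lk_hcomp in_keys_iff\<close>)

lemma hcomp_single_mult:
  "hcomp n (sg a c * p) = (if mdeg a \<le> n then sg a c * hcomp (n - mdeg a) p else 0)"
proof -
  have L: "hcomp n (sg a c * p) = (\<Sum>b\<in>ks p. if mdeg a + mdeg b = n then sg (a + b) (c * lk p b) else 0)"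
    by (simp add: single_mult_expand hcomp_sum hcomp_single mdeg_add)
  show ?thesis
  proof (cases "mdeg a \<le> n")
    case True
    have "sg a c * hcomp (n - mdeg a) p = (\<Sum>b\<in>ks p. sg (a + b) (c * (if mdeg b = n - mdeg a then lk p b else 0)))"
      by (simp add: hcomp_def sum_distrib_left mult_single)
    also have "\<dots> = (\<Sum>b\<in>ks p. if mdeg a + mdeg b = n then sg (a + b) (c * lk p b) else 0)"
      using True by (intro sum.cong) auto
    finally show ?thesis using True L by simp
  next
    case False
    then show ?thesis using L by (auto intro: sum.neutral)
  qed
qed

lemma hcomp_mult:
  "hcomp n (q * p) = (\<Sum>a\<in>ks q. if mdeg a \<le> n then sg a (lk q a) * hcomp (n - mdeg a) p else 0)"
proof -
  have "q * p = (\<Sum>a\<in>ks q. sg a (lk q a)) * p" by (simp add: pm_sum_single)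
  then have "hcomp n (q * p) = (\<Sum>a\<in>ks q. hcomp n (sg a (lk q a) * p))"
    by (simp add: sum_distrib_right hcomp_sum)
  then show ?thesis by (simp add: hcomp_single_mult)
qed

lemma ideal_homog:
  assumes hom: "hom2 F" and ring: "\<And>f. f \<in> F \<Longrightarrow> in_ring V f"
    and p: "p \<in> ideal_in V F"
  shows "hcomp n p \<in> ideal_in V F"
  using p
proof (induction arbitrary: n rule: ideal_in.induct)
  case zero then show ?case by (simp add: ideal_in.zero)
next
  case (gen f)
  then have "hcomp n f = (if n = 2 then f else 0)" using hom by (intro hcomp_hom) (auto simp: hom2_def)
  then show ?case using gen by (simp add: ideal_in.gen ideal_in.zero)
next
  case (add p q) then show ?case by (simp add: hcomp_add ideal_in.add)
next
  case (mult q p)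
  show ?case unfolding hcomp_mult
  proof (rule ideal_sum)
    fix a assume a: "a \<in> ks q"
    have "in_ring V (sg a (lk q a))" using mult.hyps(1) a by (intro in_ring_single) (auto simp: in_ring_def)
    then show "(if mdeg a \<le> n then sg a (lk q a) * hcomp (n - mdeg a) p else 0) \<in> ideal_in V F"
      using mult.IH by (auto intro: ideal_in.mult ideal_in.zero)
  qed
qed


lemma keys_mon_poly[simp]: "ks (mon_poly m :: 'k::comm_ring_1 pol) = {m}"
  by (simp add: mon_poly_def)

lemma monideal_keys:
  assumes "p \<in> ideal_in V {mon_poly (lead_mon w g) | g. g \<in> H \<and> g \<noteq> 0}" and "m \<in> ks (p :: 'k::comm_ring_1 pol)"
  shows "\<exists>g\<in>H. g \<noteq> 0 \<and> (\<exists>r. m = lead_mon w g + r)"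
  using assms
proof (induction arbitrary: m rule: ideal_in.induct)
  case zero then show ?case by simp
next
  case (gen f)
  then obtain g where "f = mon_poly (lead_mon w g)" "g \<in> H" "g \<noteq> 0" by blast
  then show ?case using gen.prems by (intro bexI[of _ g]) auto
next
  case (add p q)
  then show ?case using keys_add[of p q] by blast
next
  case (mult q p)
  obtain a b where ab: "m = a + b" "a \<in> ks q" "b \<in> ks p" using keys_mult[of q p] mult.prems by blast
  then obtain g r where "g \<in> H" "g \<noteq> 0" "b = lead_mon w g + r" using mult.IH by blast
  then show ?case using ab by (intro bexI[of _ g]) (auto intro: exI[of _ "a + r"] simp: add_ac)
qed

lemma lm_ideal_mem:
  assumes "g \<in> H" "g \<noteq> 0" "ks r \<subseteq> V"
  shows "(mon_poly (lead_mon w g + r) :: 'k::comm_ring_1 pol) \<in> lm_ideal V w H"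
proof -
  have "mon_poly r * mon_poly (lead_mon w g) \<in> lm_ideal V w H"
    unfolding lm_ideal_def using assms
    by (intro ideal_in.mult in_ring_mon_poly ideal_in.gen) auto
  then show ?thesis by (simp add: mon_poly_mult add.commute)
qed

lemma keys_add_nat: "ks (a + (b :: 'x \<Rightarrow>\<^sub>0 nat)) = ks a \<union> ks b"
  by (auto simp: in_keys_iff lookup_add)

lemma var0_pow_keys:
  assumes "(var {} :: 'k::comm_ring_1 pol) ^ k dvd g" "m \<in> ks g"
  shows "k \<le> lk m {}"
proof -
  obtain q where "g = var {} ^ k * q" using assms(1) by (auto simp: dvd_def)
  then have "ks g = (\<lambda>m. sg {} k + m) ` ks q" by (simp add: var_pow keys_single1_mult)
  then show ?thesis using assms(2) by (auto simp: lookup_add)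
qed

lemma not_dvd_witness:
  assumes nd: "\<not> (var {} :: 'k::comm_ring_1 pol) ^ (k + 1) dvd g" and g: "g = var {} ^ k * h"
  shows "\<exists>m\<in>ks h. lk m {} = 0"
proof (rule ccontr)
  assume "\<not> ?thesis"
  then have ge: "\<forall>m\<in>ks h. 1 \<le> lk m {}" by auto
  define h' where "h' = (\<Sum>m\<in>ks h. sg (m - sg {} 1) (lk h m))"
  have "var {} * h' = (\<Sum>m\<in>ks h. sg (sg {} 1 + (m - sg {} 1)) (lk h m))"
    by (simp add: h'_def var_def sum_distrib_left mult_single)
  also have "\<dots> = (\<Sum>m\<in>ks h. sg m (lk h m))"
  proof (rule sum.cong[OF refl])
    fix m assume "m \<in> ks h"
    then have "sg {} 1 + (m - sg {} 1) = m" using ge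
      by (intro poly_mapping_eqI) (auto simp: lookup_add lookup_minus lookup_single when_def)
    then show "sg (sg {} 1 + (m - sg {} 1)) (lk h m) = sg m (lk h m)" by simp
  qed
  also have "\<dots> = h" by (rule pm_sum_single)
  finally have hh: "h = var {} * h'" by simp
  have "g = var {} ^ (k + 1) * h'" unfolding g hh by (simp add: algebra_simps)
  then show False using nd by auto
qed

lemma max_pow_exists:
  assumes "(g :: 'k::comm_ring_1 pol) \<noteq> 0"
  shows "\<exists>k. var {} ^ k dvd g \<and> \<not> var {} ^ (k+1) dvd g"
proof -
  obtain m where m: "m \<in> ks g" using assms by (metis keys_eq_empty ex_in_conv)
  have ex: "\<exists>j. \<not> var {} ^ j dvd g"
  proof
    show "\<not> var {} ^ (lk m {} + 1) dvd g" using var0_pow_keys[OF _ m, of "lk m {} + 1"] by auto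
  qed
  define j where "j = (LEAST j. \<not> var {} ^ j dvd g)"
  have nj: "\<not> var {} ^ j dvd g" using LeastI_ex[OF ex] j_def by simp
  have j0: "j \<noteq> 0" using nj by (metis one_dvd power_0)
  have "var {} ^ (j - 1) dvd g" using not_less_Least[of "j - 1" "\<lambda>j. \<not> var {} ^ j dvd g"] j0 j_def by auto
  then show ?thesis using nj j0 by (intro exI[of _ "j - 1"]) auto
qed

lemma subsingleton_finite: "(\<And>x y. x \<in> A \<Longrightarrow> y \<in> A \<Longrightarrow> x = y) \<Longrightarrow> finite A"
proof (cases "A = {}")
  case False
  assume h: "\<And>x y. x \<in> A \<Longrightarrow> y \<in> A \<Longrightarrow> x = y"
  obtain x where "x \<in> A" using False by auto
  then have "A \<subseteq> {x}" using h by auto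
  then show ?thesis using finite_subset by auto
qed simp

definition Gp :: "'k::comm_ring_1 pol set \<Rightarrow> 'k pol set" where
  "Gp G = {h. \<exists>g\<in>G. \<exists>k::nat. var {} ^ k dvd g \<and> \<not> var {} ^ (k + 1) dvd g \<and> g = var {} ^ k * h}"

context
  fixes d :: nat and E :: "nat set set" and w :: "nat set \<Rightarrow> nat"
    and I G F :: "'k::field pol set"
  assumes sgr: "simple_graph d E"
    and inj: "inj_on w (stable_sets d E)"
    and wmin: "\<forall>S\<in>stable_sets d E. w {} \<le> w S"
    and red: "is_reduced_groebner_basis (stable_sets d E) w I G"
    and IF: "I = ideal_in (stable_sets d E) F"
    and homF: "hom2 F" and ringF: "\<And>f. f \<in> F \<Longrightarrow> in_ring (stable_sets d E) f"
    and LI: "L_G d E \<subseteq> I" and IIG: "I \<subseteq> I_G d E"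
begin

abbreviation "V \<equiv> stable_sets d E"

lemma GI: "G \<subseteq> I" using red by (simp add: is_reduced_groebner_basis_def is_groebner_basis_def)
lemma Gfin: "finite G" using red by (simp add: is_reduced_groebner_basis_def is_groebner_basis_def)
lemma G0: "g \<in> G \<Longrightarrow> g \<noteq> 0" using red by (simp add: is_reduced_groebner_basis_def)
lemma GB: "lm_ideal V w G = init_ideal V w I" using red by (simp add: is_reduced_groebner_basis_def is_groebner_basis_def)
lemma Gred: "g \<in> G \<Longrightarrow> m \<in> ks g \<Longrightarrow> mon_poly m \<notin> lm_ideal V w (G - {g})"
  using red by (simp add: is_reduced_groebner_basis_def)
lemma IR: "p \<in> I \<Longrightarrow> in_ring V p" using IIG by (auto simp: I_G_def)
lemma eV: "{} \<in> V" using stable_empty[OF sgr] .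

lemma homog_G:
  assumes g: "g \<in> G" and m: "m \<in> ks g"
  shows "mdeg m = mdeg (lead_mon w g)"
proof (rule ccontr)
  assume ne: "mdeg m \<noteq> mdeg (lead_mon w g)"
  define n where "n = mdeg (lead_mon w g)"
  define gl where "gl = g - hcomp n g"
  have gI: "g \<in> I" using g GI by auto
  have g0: "g \<noteq> 0" using G0 g .
  have gR: "in_ring V g" using IR gI .
  have lkgl: "\<And>x. lk gl x = (if mdeg x = n then 0 else lk g x)" by (simp add: gl_def lookup_minus lk_hcomp)
  have glI: "gl \<in> I" unfolding gl_def IF
    by (rule ideal_diff) (use gI IF ideal_homog[OF homF ringF] in auto)
  have gl0: "gl \<noteq> 0" using lkgl[of m] ne m n_def by (auto simp: in_keys_iff)
  have glR: "in_ring V gl" using IR glI .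
  define l where "l = lead_mon w gl"
  have l: "l \<in> ks gl" using lead_mon_prop[OF inj glR gl0] l_def by auto
  then have ln: "mdeg l \<noteq> n" and lg: "l \<in> ks g" using lkgl[of l] by (auto simp: in_keys_iff split: if_splits)
  have "mon_poly l \<in> init_ideal V w I" unfolding init_ideal_def l_def using glI gl0
    by (intro ideal_in.gen) auto
  then have "mon_poly l \<in> lm_ideal V w G" using GB by simp
  then obtain g2 r where g2: "g2 \<in> G" "g2 \<noteq> 0" "l = lead_mon w g2 + r"
    using monideal_keys[of "mon_poly l" V w G l] unfolding lm_ideal_def by auto
  have lV: "ks l \<subseteq> V" using lg gR by (auto simp: in_ring_def)
  have rV: "ks r \<subseteq> V" using lV g2(3) keys_add_nat[of "lead_mon w g2" r] by auto
  show False
  proof (cases "g2 = g")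
    case False
    then have "mon_poly l \<in> lm_ideal V w (G - {g})" using lm_ideal_mem[of g2 "G - {g}" r V w] g2 rV by auto
    then show False using Gred[OF g lg] by simp
  next
    case True
    then have "mdeg l \<ge> n" using g2(3) by (simp add: n_def mdeg_add)
    moreover have "l \<noteq> lead_mon w g" using ln n_def by auto
    then have "revlex_less w l (lead_mon w g)" using lead_mon_prop[OF inj gR g0] lg by auto
    then have "mdeg l \<le> n" by (auto simp: revlex_less_def n_def)
    ultimately show False using ln by simp
  qed
qed

lemma Gp_facts:
  assumes g: "g \<in> G" and nd: "\<not> var {} ^ (k+1) dvd g" and gh: "g = var {} ^ k * h"
  shows "h \<noteq> 0" "in_ring V h" "h \<in> I_G d E" "lead_mon w g = sg {} k + lead_mon w h"
    "lk (lead_mon w h) {} = 0"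
proof -
  have g0: "g \<noteq> 0" using G0 g .
  have gI: "g \<in> I" using g GI by auto
  have gR: "in_ring V g" using IR gI .
  have gIG: "g \<in> I_G d E" using gI IIG by auto
  have gh': "g = sg (sg {} k) 1 * h" using gh by (simp add: var_pow)
  show h0: "h \<noteq> 0" using g0 gh by auto
  have kg: "ks g = (\<lambda>m. sg {} k + m) ` ks h" using gh' by (simp add: keys_single1_mult)
  show hR: "in_ring V h" unfolding in_ring_def
  proof
    fix m assume "m \<in> ks h"
    then have "sg {} k + m \<in> ks g" using kg by auto
    then have "ks (sg {} k + m) \<subseteq> V" using gR by (auto simp: in_ring_def)
    then show "ks m \<subseteq> V" using keys_add_nat[of "sg {} k" m] by auto
  qed
  have "pi_map g = sg (pi_mon (sg {} k)) 1 * pi_map h"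
    unfolding gh' pi_map_mult by (simp add: pi_map_pmap)
  then have "pi_map h = 0" using gIG by (simp add: I_G_def single1_mult_eq0)
  then show "h \<in> I_G d E" using hR by (simp add: I_G_def)
  have e0: "ks (sg {} k) \<subseteq> V" using eV by simp
  show lg: "lead_mon w g = sg {} k + lead_mon w h" unfolding gh' by (rule lead_mult[OF inj hR h0 e0])
  have hom: "mdeg m = mdeg (lead_mon w h)" if m: "m \<in> ks h" for m
  proof -
    have "sg {} k + m \<in> ks g" using kg m by auto
    then have "mdeg (sg {} k + m) = mdeg (lead_mon w g)" using homog_G[OF g] by blast
    then show ?thesis using lg by (simp add: mdeg_add)
  qed
  obtain m0 where m0: "m0 \<in> ks h" "lk m0 {} = 0" using not_dvd_witness[OF nd gh] by auto
  have LP: "lead_mon w h \<in> ks h" "\<forall>m'\<in>ks h. m' \<noteq> lead_mon w h \<longrightarrow> revlex_less w m' (lead_mon w h)"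
    using lead_mon_prop[OF inj hR h0] by auto
  show "lk (lead_mon w h) {} = 0"
  proof (rule ccontr)
    assume nz: "lk (lead_mon w h) {} \<noteq> 0"
    then have "m0 \<noteq> lead_mon w h" using m0 by auto
    then have rl: "revlex_less w m0 (lead_mon w h)" using LP m0 by auto
    have "mdeg m0 = mdeg (lead_mon w h)" using hom m0 by auto
    then obtain S where S1: "lk (lead_mon w h) S < lk m0 S"
      and S2: "\<forall>T. lk m0 T \<noteq> lk (lead_mon w h) T \<longrightarrow> w S \<le> w T"
      using rl by (auto simp: revlex_less_def)
    have "w S \<le> w {}" using S2 nz m0 by auto
    moreover have SV: "S \<in> V"
    proof -
      have "S \<in> ks m0" using S1 by (auto simp: in_keys_iff)
      then show ?thesis using hR m0 by (auto simp: in_ring_def)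
    qed
    ultimately have "w S = w {}" using wmin by force
    then have "S = {}" using inj SV eV by (auto dest: inj_onD)
    then show False using S1 m0 by simp
  qed
qed

lemma Gp_finite: "finite (Gp G)"
proof -
  have "Gp G \<subseteq> (\<Union>g\<in>G. {h. \<exists>k::nat. var {} ^ k dvd g \<and> \<not> var {} ^ (k + 1) dvd g \<and> g = var {} ^ k * h})"
    unfolding Gp_def by blast
  moreover have "finite (\<Union>g\<in>G. {h. \<exists>k::nat. var {} ^ k dvd g \<and> \<not> var {} ^ (k + 1) dvd g \<and> g = var {} ^ k * h})"
  proof (rule finite_UN_I[OF Gfin], rule subsingleton_finite)
    fix g h1 h2 :: "'k pol"
    assume "h1 \<in> {h. \<exists>k::nat. var {} ^ k dvd g \<and> \<not> var {} ^ (k + 1) dvd g \<and> g = var {} ^ k * h}"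
      and "h2 \<in> {h. \<exists>k::nat. var {} ^ k dvd g \<and> \<not> var {} ^ (k + 1) dvd g \<and> g = var {} ^ k * h}"
    then obtain k1 k2 where k1: "var {} ^ k1 dvd g" "\<not> var {} ^ (k1 + 1) dvd g" "g = var {} ^ k1 * h1"
      and k2: "var {} ^ k2 dvd g" "\<not> var {} ^ (k2 + 1) dvd g" "g = var {} ^ k2 * h2" by blast
    have "k1 = k2"
    proof (rule ccontr)
      assume "k1 \<noteq> k2"
      then have "k1 + 1 \<le> k2 \<or> k2 + 1 \<le> k1" by auto
      then show False
      proof
        assume "k1 + 1 \<le> k2"
        then have "var {} ^ (k1 + 1) dvd g" using k2(1) le_imp_power_dvd dvd_trans by metis
        with k1(2) show False ..
      next
        assume "k2 + 1 \<le> k1"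
        then have "var {} ^ (k2 + 1) dvd g" using k1(1) le_imp_power_dvd dvd_trans by metis
        with k2(2) show False ..
      qed
    qed
    then have "sg (sg {} k1) 1 * h1 = sg (sg {} k1) (1::'k) * h2" using k1 k2 by (simp add: var_pow)
    then show "h1 = h2" by (rule single1_mult_cancel)
  qed
  ultimately show ?thesis by (rule finite_subset)
qed

lemma Gp_IG: "Gp G \<subseteq> I_G d E"
  unfolding Gp_def using Gp_facts(3) by blast

lemma init_gen_in:
  assumes f: "(f :: 'k pol) \<in> I_G d E" and f0: "f \<noteq> 0"
  shows "mon_poly (lead_mon w f) \<in> lm_ideal V w (Gp G)"
proof -
  obtain K where K: "(var {} ^ K * f :: 'k pol) \<in> L_G d E" using saturation[OF sgr f] by blast
  then have KI: "var {} ^ K * f \<in> I" using LI by auto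
  have fR: "in_ring V f" using f by (simp add: I_G_def)
  have e0V: "ks (sg {} K) \<subseteq> V" using eV by simp
  have F0: "var {} ^ K * f \<noteq> 0" using f0 by (simp add: var_pow single1_mult_eq0)
  have lF: "lead_mon w (var {} ^ K * f) = sg {} K + lead_mon w f"
    unfolding var_pow by (rule lead_mult[OF inj fR f0 e0V])
  have "mon_poly (lead_mon w (var {} ^ K * f)) \<in> init_ideal V w I"
    unfolding init_ideal_def using KI F0 by (intro ideal_in.gen) auto
  then have "mon_poly (sg {} K + lead_mon w f) \<in> lm_ideal V w G" using GB lF by simp
  then obtain g r where g: "g \<in> G" "g \<noteq> 0" "sg {} K + lead_mon w f = lead_mon w g + r"
    using monideal_keys[of "mon_poly (sg {} K + lead_mon w f)" V w G "sg {} K + lead_mon w f"]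
    unfolding lm_ideal_def by auto
  obtain k where dv: "var {} ^ k dvd g" and nd: "\<not> var {} ^ (k+1) dvd g" using max_pow_exists[OF g(2)] by blast
  obtain h where gh: "g = var {} ^ k * h" using dv by (auto simp: dvd_def)
  have hG: "h \<in> Gp G" unfolding Gp_def using g dv nd gh by blast
  have h0: "h \<noteq> 0" and lg: "lead_mon w g = sg {} k + lead_mon w h" and lh0: "lk (lead_mon w h) {} = 0"
    using Gp_facts[OF g(1) nd gh] by auto
  have eq: "sg {} K + lead_mon w f = sg {} k + lead_mon w h + r" using g(3) lg by simp
  have le: "lk (lead_mon w h) T \<le> lk (lead_mon w f) T" for T
  proof (cases "T = {}")
    case True then show ?thesis using lh0 by simp
  next
    case False
    have "lk (sg {} K + lead_mon w f) T = lk (sg {} k + lead_mon w h + r) T" using eq by simp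
    then show ?thesis using False by (simp add: lookup_add lookup_single when_def)
  qed
  define r' where "r' = lead_mon w f - lead_mon w h"
  have lfr: "lead_mon w f = lead_mon w h + r'"
    by (rule poly_mapping_eqI) (use le in \<open>simp add: r'_def lookup_add lookup_minus\<close>)
  have lfV: "ks (lead_mon w f) \<subseteq> V" using lead_mon_prop[OF inj fR f0] fR by (auto simp: in_ring_def)
  have "ks r' \<subseteq> V" using lfV keys_add_nat[of "lead_mon w h" r'] lfr by auto
  then show ?thesis using lm_ideal_mem[OF hG h0, of r' V w] lfr by simp
qed

lemma main_ctx: "is_groebner_basis V w (I_G d E) (Gp G)"
  unfolding is_groebner_basis_def
proof (intro conjI)
  show "finite (Gp G)" by (rule Gp_finite)
  show "Gp G \<subseteq> I_G d E" by (rule Gp_IG)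
  show "lm_ideal V w (Gp G) = init_ideal V w (I_G d E)"
  proof
    show "lm_ideal V w (Gp G) \<subseteq> init_ideal V w (I_G d E)"
      unfolding lm_ideal_def init_ideal_def
      by (rule ideal_mono) (use Gp_IG in \<open>blast intro: ideal_in.gen\<close>)
    have sub: "{mon_poly (lead_mon w p) |p::'k pol. p \<in> I_G d E \<and> p \<noteq> 0} \<subseteq> lm_ideal V w (Gp G)"
      using init_gen_in by blast
    show "init_ideal V w (I_G d E) \<subseteq> lm_ideal V w (Gp G)"
      unfolding init_ideal_def using ideal_mono[OF sub[unfolded lm_ideal_def]] by (simp add: lm_ideal_def)
  qed
qed

end


theorem proposition4p2:
  fixes d :: nat and E :: "nat set set" and w :: "nat set \<Rightarrow> nat"
    and I \<G> :: "'k::field pol set"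
  assumes "simple_graph d E"
    and "I \<in> {ideal_in (stable_sets d E) (I_G_2 d E), J_G d E, L_G d E}"
    and "inj_on w (stable_sets d E)"
    and "\<forall>S\<in>stable_sets d E. w {} \<le> w S"
    and "is_reduced_groebner_basis (stable_sets d E) w I \<G>"
  shows "is_groebner_basis (stable_sets d E) w (I_G d E)
           {h. \<exists>g\<in>\<G>. \<exists>k::nat. var {} ^ k dvd g \<and> \<not> var {} ^ (k + 1) dvd g
                              \<and> g = var {} ^ k * h}"
proof -
  let ?V = "stable_sets d E"
  note ch = chain[OF assms(1), where 'k='k]
  have "\<exists>F. I = ideal_in ?V F \<and> hom2 F \<and> (\<forall>f\<in>F. in_ring ?V f) \<and> L_G d E \<subseteq> I \<and> I \<subseteq> I_G d E"
    using assms(2)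
  proof (elim insertE emptyE)
    assume I: "I = ideal_in ?V (I_G_2 d E)"
    show ?thesis using ch hom2_IG2 ring_IG2 I by (intro exI[of _ "I_G_2 d E"]) auto
  next
    assume I: "I = J_G d E"
    have "I = ideal_in ?V (Jgens d E)" using I J_G_gens by metis
    then show ?thesis using ch hom2_J ring_J I by (intro exI[of _ "Jgens d E"]) auto
  next
    assume I: "I = L_G d E"
    have "I = ideal_in ?V (Lgens d E)" using I L_G_gens by metis
    then show ?thesis using ch hom2_L[OF assms(1)] ring_L[OF assms(1)] I by (intro exI[of _ "Lgens d E"]) auto
  qed
  then obtain F where IF: "I = ideal_in ?V F" and homF: "hom2 F" and ringF: "\<forall>f\<in>F. in_ring ?V f"
    and LI: "L_G d E \<subseteq> I" and IIG: "I \<subseteq> I_G d E" by blast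
  have ringF': "\<And>f. f \<in> F \<Longrightarrow> in_ring ?V f" using ringF by blast
  have "is_groebner_basis ?V w (I_G d E) (Gp \<G>)"
    by (rule main_ctx[OF assms(1) assms(3) assms(4) assms(5) IF homF ringF' LI IIG])
  then show ?thesis by (simp add: Gp_def)
qed


end
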